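(* Let $P$ be a finite type $\mathbb{N}$-graded upho poset with minimum element $\hat 0$ and rank function $\rho$, and suppose $P$ is a meet semilattice. Then for every integer $m\ge 1$, \[ \sum_{\substack{(p_1,\ldots,p_m)\in P^m,\\ p_1\wedge\cdots\wedge p_m=\hat 0}} x^{\rho(p_1)+\cdots+\rho(p_m)} = F_P(x)^m\cdot F_P(x^m)^{-1} \] as formal power series.
   Context: A poset $P$ is $\mathbb{N}$-graded if $P = P_0\sqcup P_1\sqcup P_2\sqcup\cdots$ (disjoint union) such that every maximal chain has the form $p_0\lessdot p_1\lessdot p_2\lessdot\cdots$ with $p_i\in P_i$ for all $i$. Its rank function $\rho\colon P\to\mathbb{N}$ is $\rho(p)=i$ for $p\in P_i$. $P$ has finite type if $\#P_i<\infty$ for all $i$. The rank generating function is $F_P(x)=\sum_{p\in P}x^{\rho(p)}$. $P$ is upper homogeneous (upho) if for every $p\in P$ the principal order filter $V_p=\{q\in P: q\ge p\}$ is isomorphic as a poset to $P$. A meet semilattice is a poset in which every pair of elements has a greatest lower bound $\wedge$. *)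

theory Defs
  imports "HOL-Library.FuncSet" "HOL-Computational_Algebra.Formal_Power_Series"
begin

definition chain_in :: "'a::order set \<Rightarrow> bool" where
  "chain_in C \<longleftrightarrow> (\<forall>x\<in>C. \<forall>y\<in>C. x \<le> y \<or> y \<le> x)"

definition maximal_chain :: "'a::order set \<Rightarrow> bool" where
  "maximal_chain C \<longleftrightarrow> chain_in C \<and> (\<forall>D. chain_in D \<and> C \<subseteq> D \<longrightarrow> D = C)"

definition covers :: "'a::order \<Rightarrow> 'a \<Rightarrow> bool" where
  "covers p q \<longleftrightarrow> p < q \<and> \<not> (\<exists>r. p < r \<and> r < q)"

text \<open>N-graded with rank function rho (P_i = rho^{-1}(i)): every maximal chain C has the form
  p_0 covered-by p_1 covered-by ... with p_i in P_i, i.e. rho maps C bijectively onto an initial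
  segment of N (finite or all of N) and consecutive elements are covering pairs.\<close>
definition graded_by :: "('a::order \<Rightarrow> nat) \<Rightarrow> bool" where
  "graded_by \<rho> \<longleftrightarrow> (\<forall>C. maximal_chain C \<longrightarrow>
      inj_on \<rho> C \<and> (\<forall>x\<in>C. \<forall>i\<le>\<rho> x. i \<in> \<rho> ` C) \<and>
      (\<forall>x\<in>C. \<forall>y\<in>C. \<rho> y = Suc (\<rho> x) \<longrightarrow> covers x y))"

definition finite_type :: "('a::order \<Rightarrow> nat) \<Rightarrow> bool" where
  "finite_type \<rho> \<longleftrightarrow> (\<forall>i. finite {p. \<rho> p = i})"

definition order_iso_on :: "('a::order \<Rightarrow> 'b::order) \<Rightarrow> 'a set \<Rightarrow> 'b set \<Rightarrow> bool" where
  "order_iso_on f A B \<longleftrightarrow> bij_betw f A B \<and> (\<forall>x\<in>A. \<forall>y\<in>A. x \<le> y \<longleftrightarrow> f x \<le> f y)"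

definition upho :: "'a::order itself \<Rightarrow> bool" where
  "upho _ \<longleftrightarrow> (\<forall>p::'a. \<exists>f. order_iso_on f {q. q \<ge> p} (UNIV :: 'a set))"

definition is_meet :: "'a::order set \<Rightarrow> 'a \<Rightarrow> bool" where
  "is_meet S z \<longleftrightarrow> (\<forall>s\<in>S. z \<le> s) \<and> (\<forall>d. (\<forall>s\<in>S. d \<le> s) \<longrightarrow> d \<le> z)"

definition meet_semilattice :: "'a::order itself \<Rightarrow> bool" where
  "meet_semilattice _ \<longleftrightarrow> (\<forall>a b::'a. \<exists>z. is_meet {a, b} z)"

definition rank_gf :: "('a::order \<Rightarrow> nat) \<Rightarrow> rat fps" where
  "rank_gf \<rho> = Abs_fps (\<lambda>n. of_nat (card {p. \<rho> p = n}))"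

definition meet_tuple_gf :: "('a::order \<Rightarrow> nat) \<Rightarrow> 'a \<Rightarrow> nat \<Rightarrow> rat fps" where
  "meet_tuple_gf \<rho> z m = Abs_fps (\<lambda>n. of_nat (card
     {p \<in> {..<m} \<rightarrow>\<^sub>E (UNIV :: 'a set). is_meet (p ` {..<m}) z \<and> (\<Sum>i<m. \<rho> (p i)) = n}))"

end

theory Submission imports Defs begin

lemma upd_restrict: "a \<in> {..<Suc k} \<rightarrow>\<^sub>E UNIV \<Longrightarrow> (restrict a {..<k})(k := a k) = a"
  by (rule ext) (auto simp: PiE_iff extensional_def)
lemma restrict_upd: "r \<in> {..<(k::nat)} \<rightarrow>\<^sub>E UNIV \<Longrightarrow> restrict (r(k := q)) {..<k} = r"
  by (rule ext) (auto simp: PiE_iff extensional_def)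
lemma upd_PiE: "r \<in> {..<k} \<rightarrow>\<^sub>E UNIV \<Longrightarrow> r(k := q) \<in> {..<Suc k} \<rightarrow>\<^sub>E UNIV"
  by (auto simp: PiE_iff extensional_def)
lemma restrict_PiE': "restrict a {..<k} \<in> {..<k} \<rightarrow>\<^sub>E UNIV"
  by simp

lemma chain_union: "chain_in S \<Longrightarrow> \<exists>C. maximal_chain C \<and> S \<subseteq> C"
proof -
  assume S: "chain_in S"
  let ?A = "{D. chain_in D \<and> S \<subseteq> D}"
  have "\<forall>C\<in>chains ?A. \<exists>U\<in>?A. \<forall>X\<in>C. X \<subseteq> U"
  proof
    fix C assume C: "C \<in> chains ?A"
    have Csub: "\<And>D. D \<in> C \<Longrightarrow> chain_in D \<and> S \<subseteq> D" using C unfolding chains_def by blast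
    have Cch: "\<And>D1 D2. D1 \<in> C \<Longrightarrow> D2 \<in> C \<Longrightarrow> D1 \<subseteq> D2 \<or> D2 \<subseteq> D1"
      using C unfolding chains_def chain_subset_def by blast
    have "x \<le> y \<or> y \<le> x" if x: "x \<in> S \<union> \<Union>C" and y: "y \<in> S \<union> \<Union>C" for x y
    proof -
      have "\<exists>D. chain_in D \<and> x \<in> D \<and> y \<in> D"
      proof (cases "x \<in> S")
        case xS: True
        show ?thesis
        proof (cases "y \<in> S")
          case True then show ?thesis using xS S by blast
        next
          case False then obtain D where "D \<in> C" "y \<in> D" using y by blast
          then show ?thesis using Csub xS by blast
        qed
      next
        case False then obtain D1 where D1: "D1 \<in> C" "x \<in> D1" using x by blast
        show ?thesis
        proof (cases "y \<in> S")
          case True then show ?thesis using Csub D1 by blast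
        next
          case False then obtain D2 where D2: "D2 \<in> C" "y \<in> D2" using y by blast
          from Cch[OF D1(1) D2(1)] show ?thesis using D1 D2 Csub by blast
        qed
      qed
      then show ?thesis unfolding chain_in_def by blast
    qed
    then have "S \<union> \<Union>C \<in> ?A" unfolding chain_in_def by blast
    then show "\<exists>U\<in>?A. \<forall>X\<in>C. X \<subseteq> U" by blast
  qed
  from Zorn_Lemma2[OF this] obtain M where M: "M \<in> ?A" "\<forall>X\<in>?A. M \<subseteq> X \<longrightarrow> X = M"
    by blast
  have "maximal_chain M" unfolding maximal_chain_def using M by auto
  with M show ?thesis by blast
qed

lemma chain_pair: "(x::'a::order) \<le> y \<Longrightarrow> chain_in {x, y}"
  unfolding chain_in_def by auto

context
  fixes \<rho> :: "'a::order \<Rightarrow> nat"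
  assumes gr: "graded_by \<rho>"
begin
unbundle fps_syntax

lemma mc_inj: "maximal_chain C \<Longrightarrow> inj_on \<rho> C"
  using gr unfolding graded_by_def by blast
lemma mc_down: "maximal_chain C \<Longrightarrow> x \<in> C \<Longrightarrow> i \<le> \<rho> x \<Longrightarrow> \<exists>y\<in>C. \<rho> y = i"
  using gr unfolding graded_by_def by blast
lemma mc_cov: "maximal_chain C \<Longrightarrow> x \<in> C \<Longrightarrow> y \<in> C \<Longrightarrow> \<rho> y = Suc (\<rho> x) \<Longrightarrow> covers x y"
  using gr unfolding graded_by_def by blast

lemma mc_mono_aux: "maximal_chain C \<Longrightarrow> x \<in> C \<Longrightarrow> y \<in> C \<Longrightarrow> \<rho> y = \<rho> x + Suc d \<Longrightarrow> x < y"
proof (induction d arbitrary: y)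
  case 0
  then show ?case using mc_cov[of C x y] by (simp add: covers_def)
next
  case (Suc d)
  obtain y' where y': "y' \<in> C" "\<rho> y' = \<rho> x + Suc d"
    using mc_down[of C y "\<rho> x + Suc d"] Suc.prems by auto
  have "x < y'" using Suc.IH[of y'] Suc.prems y' by auto
  moreover have "covers y' y" using mc_cov[of C y' y] Suc.prems y' by auto
  ultimately show ?case by (auto simp: covers_def)
qed

lemma mc_mono: "maximal_chain C \<Longrightarrow> x \<in> C \<Longrightarrow> y \<in> C \<Longrightarrow> \<rho> x < \<rho> y \<Longrightarrow> x < y"
  using mc_mono_aux[of C x y "\<rho> y - \<rho> x - 1"] by auto

lemma mc_mono_iff: "maximal_chain C \<Longrightarrow> x \<in> C \<Longrightarrow> y \<in> C \<Longrightarrow> x < y \<longleftrightarrow> \<rho> x < \<rho> y"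
proof
  assume a: "maximal_chain C" "x \<in> C" "y \<in> C" "x < y"
  show "\<rho> x < \<rho> y"
  proof (rule ccontr)
    assume "\<not> \<rho> x < \<rho> y"
    moreover have "\<rho> x \<noteq> \<rho> y" using a mc_inj[of C] unfolding inj_on_def by auto
    ultimately have "y < x" using mc_mono[of C y x] a by auto
    with a show False by auto
  qed
qed (rule mc_mono)

lemma less_rank: "(p::'a) < q \<Longrightarrow> \<rho> p < \<rho> q"
proof -
  assume pq: "p < q"
  obtain C where C: "maximal_chain C" "{p,q} \<subseteq> C" using chain_union[OF chain_pair[OF less_imp_le[OF pq]]] by auto
  then show ?thesis using mc_mono_iff[of C p q] pq by auto
qed

lemma covers_rank: "covers p q \<Longrightarrow> \<rho> q = Suc (\<rho> p)"
proof -
  assume cv: "covers p q"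
  then have pq: "p < q" by (simp add: covers_def)
  obtain C where C: "maximal_chain C" "{p,q} \<subseteq> C" using chain_union[OF chain_pair[OF less_imp_le[OF pq]]] by auto
  have lt: "\<rho> p < \<rho> q" using less_rank pq by auto
  show ?thesis
  proof (rule ccontr)
    assume "\<rho> q \<noteq> Suc (\<rho> p)"
    then have "Suc (\<rho> p) < \<rho> q" using lt by auto
    then obtain r where r: "r \<in> C" "\<rho> r = Suc (\<rho> p)" using mc_down[of C q "Suc (\<rho> p)"] C by auto
    have "p < r" "r < q" using mc_mono[of C p r] mc_mono[of C r q] C r \<open>Suc (\<rho> p) < \<rho> q\<close> by auto
    with cv show False by (auto simp: covers_def)
  qed
qed

lemma min_rank: "\<forall>p. (a::'a) \<le> p \<Longrightarrow> \<rho> a = 0"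
proof -
  assume mn: "\<forall>p. a \<le> p"
  obtain C where C: "maximal_chain C" "{a} \<subseteq> C" using chain_union[of "{a}"] by (auto simp: chain_in_def)
  obtain c where c: "c \<in> C" "\<rho> c = 0" using mc_down[of C a 0] C by auto
  show ?thesis
  proof (cases "c = a")
    case False
    then have "a < c" using mn by (simp add: order_less_le)
    then show ?thesis using less_rank[of a c] c by simp
  qed (use c in auto)
qed

lemma iso_less: "order_iso_on f A B \<Longrightarrow> x \<in> A \<Longrightarrow> y \<in> A \<Longrightarrow> x < y \<longleftrightarrow> f x < f y"
  unfolding order_iso_on_def bij_betw_def inj_on_def by (auto simp: order_less_le)

lemma shift_rank:
  assumes f: "order_iso_on f {q. z \<le> q} (UNIV::'a set)" and zq: "z \<le> q"
  shows "\<rho> (f q) + \<rho> z = \<rho> q"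
proof -
  obtain C where C: "maximal_chain C" "{z,q} \<subseteq> C" using chain_union[OF chain_pair[OF zq]] by auto
  have fz: "\<rho> (f z) = 0"
  proof (rule min_rank, rule allI)
    fix p :: 'a
    have "p \<in> f ` {q. z \<le> q}" using f unfolding order_iso_on_def bij_betw_def by simp
    then obtain x where x: "z \<le> x" "p = f x" by blast
    then show "f z \<le> p" using f unfolding order_iso_on_def by blast
  qed
  have "\<forall>q. q \<in> C \<longrightarrow> \<rho> q = n \<longrightarrow> z \<le> q \<longrightarrow> \<rho> (f q) + \<rho> z = \<rho> q" for n
  proof (induction n rule: less_induct)
    case (less n)
    show ?case
    proof (intro allI impI)
      fix q assume q: "q \<in> C" "\<rho> q = n" "z \<le> q"
      show "\<rho> (f q) + \<rho> z = \<rho> q"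
      proof (cases "q = z")
        case True then show ?thesis using fz by simp
      next
        case False
        then have "z < q" using q by auto
        have zC: "z \<in> C" using C by simp
        have lt: "\<rho> z < \<rho> q" using mc_mono_iff[OF C(1) zC q(1)] \<open>z < q\<close> by simp
        obtain q' where q': "q' \<in> C" "\<rho> q' = \<rho> q - 1" using mc_down[OF C(1) q(1), of "\<rho> q - 1"] by auto
        have zq': "z \<le> q'"
        proof (cases "\<rho> z = \<rho> q'")
          case True then have "z = q'" using inj_onD[OF mc_inj[OF C(1)] _ zC q'(1)] by simp
          then show ?thesis by simp
        next
          case False then have "\<rho> z < \<rho> q'" using q' lt by simp
          then show ?thesis using mc_mono[OF C(1) zC q'(1)] by simp
        qed
        have cv: "covers q' q" using mc_cov[OF C(1) q'(1) q(1)] q' lt by simp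
        have "covers (f q') (f q)"
        proof -
          have "q' < q" using cv by (simp add: covers_def)
          then have "f q' < f q" using iso_less[OF f, of q' q] zq' q by simp
          moreover have "\<not> (\<exists>r. f q' < r \<and> r < f q)"
          proof
            assume "\<exists>r. f q' < r \<and> r < f q"
            then obtain r where r: "f q' < r" "r < f q" by auto
            have "r \<in> f ` {q. z \<le> q}" using f unfolding order_iso_on_def bij_betw_def by simp
            then obtain x where x: "z \<le> x" "r = f x" by blast
            have "q' < x" using iso_less[OF f, of q' x] x r zq' by simp
            moreover have "x < q" using iso_less[OF f, of x q] x r q by simp
            ultimately show False using cv by (auto simp: covers_def)
          qed
          ultimately show ?thesis by (simp add: covers_def)
        qed
        then have "\<rho> (f q) = Suc (\<rho> (f q'))" by (rule covers_rank)
        moreover have "\<rho> (f q') + \<rho> z = \<rho> q'" using less.IH[of "\<rho> q'"] q' zq' lt q by simp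
        ultimately show ?thesis using q' lt by simp
      qed
    qed
  qed
  from this[of "\<rho> q"] C zq show ?thesis by simp
qed


lemma le_rank: "(p::'a) \<le> q \<Longrightarrow> \<rho> p \<le> \<rho> q"
  using less_rank[of p q] by (cases "p = q") (auto simp: order_less_le)

end

lemma meet_unique: "is_meet S (a::'a::order) \<Longrightarrow> is_meet S b \<Longrightarrow> a = b"
  unfolding is_meet_def by (meson order_antisym)

lemma meet_exists:
  assumes ms: "meet_semilattice TYPE('a::order)"
  shows "finite S \<Longrightarrow> S \<noteq> {} \<Longrightarrow> \<exists>z. is_meet (S::'a set) z"
proof (induction S rule: finite_ne_induct)
  case (singleton x)
  then show ?case by (auto simp: is_meet_def)
next
  case (insert x F)
  then obtain z where z: "is_meet F z" by blast
  obtain w where w: "is_meet {x, z} w" using ms unfolding meet_semilattice_def by blast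
  have "is_meet (insert x F) w" using z w unfolding is_meet_def by (auto intro: order_trans)
  then show ?case by blast
qed

lemma iso_meet:
  assumes f: "order_iso_on f {q. z \<le> q} (UNIV::'a::order set)"
    and S: "S \<subseteq> {q. z \<le> q}" and w: "z \<le> w" and m: "is_meet S w"
  shows "is_meet (f ` S) (f w)"
  unfolding is_meet_def
proof (intro conjI allI impI ballI)
  fix s assume "s \<in> f ` S"
  then obtain s' where "s' \<in> S" "s = f s'" by blast
  then show "f w \<le> s" using f S w m unfolding order_iso_on_def is_meet_def by blast
next
  fix d assume d: "\<forall>s\<in>f ` S. d \<le> s"
  have "d \<in> f ` {q. z \<le> q}" using f unfolding order_iso_on_def bij_betw_def by simp
  then obtain d' where d': "z \<le> d'" "d = f d'" by blast
  have "\<forall>s\<in>S. d' \<le> s" using d d' f S unfolding order_iso_on_def by blast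
  then have "d' \<le> w" using m unfolding is_meet_def by blast
  then show "d \<le> f w" using d' w f unfolding order_iso_on_def by blast
qed

definition TT :: "('a::order \<Rightarrow> nat) \<Rightarrow> nat \<Rightarrow> nat \<Rightarrow> (nat \<Rightarrow> 'a) set" where
  "TT \<rho> k n = {p \<in> {..<k} \<rightarrow>\<^sub>E (UNIV :: 'a set). (\<Sum>i<k. \<rho> (p i)) = n}"

lemma finite_rank_le: "finite_type \<rho> \<Longrightarrow> finite {p. \<rho> p \<le> n}"
proof -
  assume ft: "finite_type \<rho>"
  have "{p. \<rho> p \<le> n} = (\<Union>i\<le>n. {p. \<rho> p = i})" by auto
  then show ?thesis using ft unfolding finite_type_def by simp
qed

lemma finite_TT: "finite_type \<rho> \<Longrightarrow> finite (TT \<rho> k n)"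
proof -
  assume ft: "finite_type \<rho>"
  have "TT \<rho> k n \<subseteq> {..<k} \<rightarrow>\<^sub>E {p. \<rho> p \<le> n}"
  proof
    fix p assume p: "p \<in> TT \<rho> k n"
    have "\<rho> (p i) \<le> n" if "i < k" for i
      using p that member_le_sum[of i "{..<k}" "\<lambda>i. \<rho> (p i)"] unfolding TT_def by auto
    then show "p \<in> {..<k} \<rightarrow>\<^sub>E {p. \<rho> p \<le> n}" using p unfolding TT_def by auto
  qed
  moreover have "finite ({..<k} \<rightarrow>\<^sub>E {p. \<rho> p \<le> n})"
    using finite_rank_le[OF ft] by (simp add: finite_PiE)
  ultimately show ?thesis by (rule finite_subset)
qed

lemma card_TT_Suc:
  assumes ft: "finite_type \<rho>"
  shows "card (TT \<rho> (Suc k) n) = (\<Sum>i\<le>n. card {p. \<rho> p = i} * card (TT \<rho> k (n - i)))"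
proof -
  define B where "B i = {p \<in> TT \<rho> (Suc k) n. \<rho> (p k) = i}" for i
  have sumS: "(\<Sum>i<Suc k. \<rho> (p i)) = (\<Sum>i<k. \<rho> (p i)) + \<rho> (p k)" for p by simp
  have U: "TT \<rho> (Suc k) n = (\<Union>i\<le>n. B i)"
  proof (intro equalityI subsetI)
    fix p assume p: "p \<in> TT \<rho> (Suc k) n"
    then have "\<rho> (p k) \<le> n" unfolding TT_def sumS by simp
    then show "p \<in> (\<Union>i\<le>n. B i)" using p unfolding B_def by blast
  next
    fix p assume "p \<in> (\<Union>i\<le>n. B i)"
    then show "p \<in> TT \<rho> (Suc k) n" unfolding B_def by blast
  qed
  have cB: "card (B i) = card {p. \<rho> p = i} * card (TT \<rho> k (n - i))" if i: "i \<le> n" for i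
  proof -
    have "bij_betw (\<lambda>p. (p k, restrict p {..<k})) (B i) ({p. \<rho> p = i} \<times> TT \<rho> k (n - i))"
    proof (rule bij_betw_byWitness[where f' = "\<lambda>(q, r). r(k := q)"])
      show "\<forall>a\<in>B i. (\<lambda>(q, r). r(k := q)) (a k, restrict a {..<k}) = a"
      proof
        fix a assume "a \<in> B i"
        then have "a \<in> {..<Suc k} \<rightarrow>\<^sub>E UNIV" unfolding B_def TT_def by blast
        then show "(\<lambda>(q, r). r(k := q)) (a k, restrict a {..<k}) = a" using upd_restrict by simp
      qed
      show "\<forall>a'\<in>{p. \<rho> p = i} \<times> TT \<rho> k (n - i). (\<lambda>p. (p k, restrict p {..<k})) ((\<lambda>(q, r). r(k := q)) a') = a'"
      proof
        fix a' assume "a' \<in> {p. \<rho> p = i} \<times> TT \<rho> k (n - i)"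
        then obtain q r where "a' = (q, r)" "r \<in> {..<k} \<rightarrow>\<^sub>E UNIV" unfolding TT_def by blast
        then show "(\<lambda>p. (p k, restrict p {..<k})) ((\<lambda>(q, r). r(k := q)) a') = a'"
          using restrict_upd[of r k q] by simp
      qed
      show "(\<lambda>p. (p k, restrict p {..<k})) ` B i \<subseteq> {p. \<rho> p = i} \<times> TT \<rho> k (n - i)"
      proof
        fix x assume "x \<in> (\<lambda>p. (p k, restrict p {..<k})) ` B i"
        then obtain p where p: "p \<in> B i" "x = (p k, restrict p {..<k})" by blast
        have "(\<Sum>j<k. \<rho> (restrict p {..<k} j)) = (\<Sum>j<k. \<rho> (p j))" by (rule sum.cong) auto
        moreover have "(\<Sum>j<k. \<rho> (p j)) + \<rho> (p k) = n" "\<rho> (p k) = i"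
          using p(1) unfolding B_def TT_def sumS by auto
        ultimately show "x \<in> {p. \<rho> p = i} \<times> TT \<rho> k (n - i)" using p(2) unfolding TT_def by simp
      qed
      show "(\<lambda>(q, r). r(k := q)) ` ({p. \<rho> p = i} \<times> TT \<rho> k (n - i)) \<subseteq> B i"
      proof
        fix x assume "x \<in> (\<lambda>(q, r). r(k := q)) ` ({p. \<rho> p = i} \<times> TT \<rho> k (n - i))"
        then obtain q r where qr: "\<rho> q = i" "r \<in> TT \<rho> k (n - i)" "x = r(k := q)" by auto
        have "(\<Sum>j<k. \<rho> ((r(k := q)) j)) = (\<Sum>j<k. \<rho> (r j))" by (rule sum.cong) auto
        moreover have "r \<in> {..<k} \<rightarrow>\<^sub>E UNIV" "(\<Sum>j<k. \<rho> (r j)) = n - i" using qr(2) unfolding TT_def by auto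
        ultimately have "x \<in> TT \<rho> (Suc k) n" using qr i upd_PiE[of r k q] unfolding TT_def sumS by simp
        then show "x \<in> B i" using qr unfolding B_def by simp
      qed
    qed
    then have "card (B i) = card ({p. \<rho> p = i} \<times> TT \<rho> k (n - i))" by (rule bij_betw_same_card)
    then show ?thesis by (simp add: card_cartesian_product)
  qed
  have fB: "finite (B i)" for i using finite_TT[OF ft, of "Suc k" n] unfolding B_def by simp
  have "card (TT \<rho> (Suc k) n) = (\<Sum>i\<le>n. card (B i))"
    unfolding U by (rule card_UN_disjoint) (use fB in \<open>auto simp: B_def\<close>)
  then show ?thesis using cB by simp
qed


lemma rank_gf_nth: "rank_gf \<rho> $ n = of_nat (card {p. \<rho> p = n})"
  by (simp add: rank_gf_def)

lemma power_coeff: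
  assumes ft: "finite_type \<rho>"
  shows "(rank_gf \<rho> ^ k) $ n = of_nat (card (TT \<rho> k n))"
proof (induction k arbitrary: n)
  case 0
  have "TT \<rho> 0 n = (if n = 0 then {\<lambda>_. undefined} else {})" unfolding TT_def by auto
  then show ?case by simp
next
  case (Suc k)
  have "(rank_gf \<rho> ^ Suc k) $ n = (\<Sum>i=0..n. rank_gf \<rho> $ i * (rank_gf \<rho> ^ k) $ (n - i))"
    by (simp add: fps_mult_nth)
  also have "\<dots> = (\<Sum>i\<le>n. of_nat (card {p. \<rho> p = i} * card (TT \<rho> k (n - i))))"
    by (simp add: Suc.IH rank_gf_nth atLeast0AtMost)
  also have "\<dots> = of_nat (card (TT \<rho> (Suc k) n))"
    by (simp add: card_TT_Suc[OF ft] of_nat_sum)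
  finally show ?case .
qed

definition Am :: "('a::order \<Rightarrow> nat) \<Rightarrow> nat \<Rightarrow> 'a \<Rightarrow> nat \<Rightarrow> (nat \<Rightarrow> 'a) set" where
  "Am \<rho> m z n = {p \<in> {..<m} \<rightarrow>\<^sub>E (UNIV :: 'a set). is_meet (p ` {..<m}) z \<and> (\<Sum>i<m. \<rho> (p i)) = n}"

lemma card_TT_meet:
  assumes gr: "graded_by \<rho>" and ft: "finite_type \<rho>" and ms: "meet_semilattice TYPE('a::order)"
    and m: "m \<ge> 1"
  shows "card (TT \<rho> m n) = (\<Sum>z\<in>{z. \<rho> z \<le> n}. card (Am \<rho> m (z::'a) n))"
proof -
  have U: "TT \<rho> m n = (\<Union>z\<in>{z. \<rho> z \<le> n}. Am \<rho> m z n)"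
  proof (intro equalityI subsetI)
    fix p assume p: "p \<in> TT \<rho> m n"
    have "0 \<in> {..<m}" using m by simp
    then have "finite (p ` {..<m})" "p ` {..<m} \<noteq> {}" by auto
    then obtain z where z: "is_meet (p ` {..<m}) z" using meet_exists[OF ms] by blast
    have "z \<le> p 0" using z m unfolding is_meet_def by auto
    then have "\<rho> z \<le> \<rho> (p 0)" by (rule le_rank[OF gr])
    also have "\<rho> (p 0) \<le> (\<Sum>i<m. \<rho> (p i))" using m by (intro member_le_sum) auto
    finally have "\<rho> z \<le> n" using p unfolding TT_def by simp
    then show "p \<in> (\<Union>z\<in>{z. \<rho> z \<le> n}. Am \<rho> m z n)" using p z unfolding TT_def Am_def by blast
  next
    fix p assume "p \<in> (\<Union>z\<in>{z. \<rho> z \<le> n}. Am \<rho> m z n)"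
    then show "p \<in> TT \<rho> m n" unfolding TT_def Am_def by blast
  qed
  have fA: "finite (Am \<rho> m z n)" for z
    by (rule finite_subset[OF _ finite_TT[OF ft, of m n]]) (auto simp: TT_def Am_def)
  have "card (TT \<rho> m n) = (\<Sum>z\<in>{z. \<rho> z \<le> n}. card (Am \<rho> m z n))"
    unfolding U
  proof (rule card_UN_disjoint)
    show "finite {z. \<rho> z \<le> n}" using finite_rank_le[OF ft] .
    show "\<forall>i\<in>{z. \<rho> z \<le> n}. finite (Am \<rho> m i n)" using fA by blast
    show "\<forall>i\<in>{z. \<rho> z \<le> n}. \<forall>j\<in>{z. \<rho> z \<le> n}. i \<noteq> j \<longrightarrow> Am \<rho> m i n \<inter> Am \<rho> m j n = {}"
      unfolding Am_def using meet_unique by blast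
  qed
  then show ?thesis .
qed


lemma card_Am:
  assumes gr: "graded_by \<rho>" and ms: "meet_semilattice TYPE('a::order)"
    and up: "upho TYPE('a)" and zmin: "\<forall>p. zero \<le> p" and m: "m \<ge> 1"
  shows "card (Am \<rho> m (z::'a) n) = (if m * \<rho> z \<le> n then card (Am \<rho> m zero (n - m * \<rho> z)) else 0)"
proof -
  obtain f where f: "order_iso_on f {q. z \<le> q} (UNIV::'a set)" using up unfolding upho_def by blast
  define A where "A = {q. z \<le> q}"
  define g where "g = inv_into A f"
  have injf: "inj_on f A" and surjf: "f ` A = UNIV" using f unfolding order_iso_on_def bij_betw_def A_def by auto
  have gA: "g y \<in> A" for y unfolding g_def using surjf by (simp add: inv_into_into)
  have fg: "f (g y) = y" for y unfolding g_def using surjf by (simp add: f_inv_into_f)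
  have gf: "x \<in> A \<Longrightarrow> g (f x) = x" for x unfolding g_def using injf by (simp add: inv_into_f_f)
  have fle: "x \<in> A \<Longrightarrow> y \<in> A \<Longrightarrow> x \<le> y \<longleftrightarrow> f x \<le> f y" for x y
    using f unfolding order_iso_on_def A_def by blast
  have fz: "f z = zero"
  proof (rule order_antisym)
    have "f z \<le> f (g zero)" using fle[of z "g zero"] gA[of zero] by (simp add: A_def)
    then show "f z \<le> zero" by (simp add: fg)
  qed (use zmin in simp)
  have shift: "q \<in> A \<Longrightarrow> \<rho> (f q) + \<rho> z = \<rho> q" for q
    using shift_rank[OF gr f] by (simp add: A_def)
  have ge: "p \<in> Am \<rho> m z n \<Longrightarrow> i < m \<Longrightarrow> p i \<in> A" for p i
    unfolding Am_def is_meet_def A_def by auto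
  have sumz: "(\<Sum>i<m. \<rho> z) = m * \<rho> z" by simp
  show ?thesis
  proof (cases "m * \<rho> z \<le> n")
    case False
    have "Am \<rho> m z n = {}"
    proof (rule ccontr)
      assume "Am \<rho> m z n \<noteq> {}"
      then obtain p where p: "p \<in> Am \<rho> m z n" by blast
      have "(\<Sum>i<m. \<rho> z) \<le> (\<Sum>i<m. \<rho> (p i))"
        by (rule sum_mono) (use ge[OF p] le_rank[OF gr] in \<open>auto simp: A_def\<close>)
      then show False using p False unfolding Am_def by simp
    qed
    then show ?thesis using False by simp
  next
    case True
    define \<Phi> where "\<Phi> p = restrict (\<lambda>i. f (p i)) {..<m}" for p :: "nat \<Rightarrow> 'a"
    define \<Psi> where "\<Psi> r = restrict (\<lambda>i. g (r i)) {..<m}" for r :: "nat \<Rightarrow> 'a"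
    have "bij_betw \<Phi> (Am \<rho> m z n) (Am \<rho> m zero (n - m * \<rho> z))"
    proof (rule bij_betw_byWitness[where f' = \<Psi>])
      show "\<forall>a\<in>Am \<rho> m z n. \<Psi> (\<Phi> a) = a"
      proof
        fix p assume p: "p \<in> Am \<rho> m z n"
        then have pE: "p \<in> {..<m} \<rightarrow>\<^sub>E UNIV" unfolding Am_def by blast
        show "\<Psi> (\<Phi> p) = p"
        proof (rule ext)
          fix i show "\<Psi> (\<Phi> p) i = p i"
            using pE gf[OF ge[OF p]] unfolding \<Psi>_def \<Phi>_def by (auto simp: PiE_iff extensional_def)
        qed
      qed
      show "\<forall>a\<in>Am \<rho> m zero (n - m * \<rho> z). \<Phi> (\<Psi> a) = a"
      proof
        fix p assume p: "p \<in> Am \<rho> m zero (n - m * \<rho> z)"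
        then have pE: "p \<in> {..<m} \<rightarrow>\<^sub>E UNIV" unfolding Am_def by blast
        show "\<Phi> (\<Psi> p) = p"
        proof (rule ext)
          fix i show "\<Phi> (\<Psi> p) i = p i"
            using pE fg unfolding \<Psi>_def \<Phi>_def by (auto simp: PiE_iff extensional_def)
        qed
      qed
      show "\<Phi> ` Am \<rho> m z n \<subseteq> Am \<rho> m zero (n - m * \<rho> z)"
      proof
        fix x assume "x \<in> \<Phi> ` Am \<rho> m z n"
        then obtain p where p: "p \<in> Am \<rho> m z n" and x: "x = \<Phi> p" by blast
        have img: "x ` {..<m} = f ` (p ` {..<m})" unfolding x \<Phi>_def by auto
        have S: "p ` {..<m} \<subseteq> {q. z \<le> q}" using ge[OF p] by (auto simp: A_def)
        have "is_meet (f ` (p ` {..<m})) (f z)"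
          by (rule iso_meet[OF f S]) (use p in \<open>auto simp: Am_def\<close>)
        then have meet: "is_meet (x ` {..<m}) zero" using img fz by simp
        have s1: "(\<Sum>i<m. \<rho> (x i)) = (\<Sum>i<m. \<rho> (f (p i)))" unfolding x \<Phi>_def by (rule sum.cong) auto
        have "(\<Sum>i<m. \<rho> (f (p i))) + m * \<rho> z = (\<Sum>i<m. \<rho> (f (p i)) + \<rho> z)"
          by (simp add: sum.distrib)
        also have "\<dots> = (\<Sum>i<m. \<rho> (p i))" by (rule sum.cong) (use shift ge[OF p] in auto)
        also have "\<dots> = n" using p unfolding Am_def by simp
        finally have "(\<Sum>i<m. \<rho> (x i)) = n - m * \<rho> z" using s1 by simp
        moreover have "x \<in> {..<m} \<rightarrow>\<^sub>E UNIV" unfolding x \<Phi>_def by simp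
        ultimately show "x \<in> Am \<rho> m zero (n - m * \<rho> z)" using meet unfolding Am_def by blast
      qed
      show "\<Psi> ` Am \<rho> m zero (n - m * \<rho> z) \<subseteq> Am \<rho> m z n"
      proof
        fix x assume "x \<in> \<Psi> ` Am \<rho> m zero (n - m * \<rho> z)"
        then obtain r where r: "r \<in> Am \<rho> m zero (n - m * \<rho> z)" and x: "x = \<Psi> r" by blast
        have img: "x ` {..<m} = g ` (r ` {..<m})" unfolding x \<Psi>_def by auto
        have S: "g ` (r ` {..<m}) \<subseteq> {q. z \<le> q}" using gA by (auto simp: A_def)
        have "0 \<in> {..<m}" using m by simp
        then have "finite (g ` (r ` {..<m}))" "g ` (r ` {..<m}) \<noteq> {}" by auto
        then obtain w where w: "is_meet (g ` (r ` {..<m})) w" using meet_exists[OF ms] by blast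
        have "\<forall>s\<in>g ` (r ` {..<m}). z \<le> s" using S by blast
        then have zw: "z \<le> w" using w unfolding is_meet_def by blast
        have "is_meet (f ` (g ` (r ` {..<m}))) (f w)" by (rule iso_meet[OF f S zw w])
        moreover have "f ` (g ` (r ` {..<m})) = r ` {..<m}" using fg by (auto simp: image_image)
        ultimately have "is_meet (r ` {..<m}) (f w)" by simp
        moreover have "is_meet (r ` {..<m}) zero" using r unfolding Am_def by blast
        ultimately have "f w = f z" using meet_unique fz by metis
        then have "w = z" using injf zw unfolding A_def inj_on_def by auto
        then have meet: "is_meet (x ` {..<m}) z" using w img by simp
        have s1: "(\<Sum>i<m. \<rho> (x i)) = (\<Sum>i<m. \<rho> (g (r i)))" unfolding x \<Psi>_def by (rule sum.cong) auto
        also have "\<dots> = (\<Sum>i<m. \<rho> (r i) + \<rho> z)"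
          by (rule sum.cong) (use shift[OF gA] fg in auto)
        also have "\<dots> = (\<Sum>i<m. \<rho> (r i)) + m * \<rho> z" by (simp add: sum.distrib)
        also have "\<dots> = n" using r True unfolding Am_def by simp
        finally have "(\<Sum>i<m. \<rho> (x i)) = n" .
        moreover have "x \<in> {..<m} \<rightarrow>\<^sub>E UNIV" unfolding x \<Psi>_def by simp
        ultimately show "x \<in> Am \<rho> m z n" using meet unfolding Am_def by blast
      qed
    qed
    then show ?thesis using True by (simp add: bij_betw_same_card)
  qed
qed


lemma compose_Xpow_nth:
  assumes m: "m \<ge> 1"
  shows "((F::rat fps) oo fps_X ^ m) $ i = (if m dvd i then F $ (i div m) else 0)"
proof -
  have "((F::rat fps) oo fps_X ^ m) $ i = (\<Sum>j=0..i. (if j = i div m \<and> m dvd i then F $ j else 0))"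
    unfolding fps_compose_nth
  proof (rule sum.cong[OF refl])
    fix j assume "j \<in> {0..i}"
    have "(i = m * j) \<longleftrightarrow> (j = i div m \<and> m dvd i)" using m by auto
    then show "F $ j * ((fps_X ^ m) ^ j $ i) = (if j = i div m \<and> m dvd i then F $ j else 0)"
      by (simp add: power_mult[symmetric])
  qed
  also have "\<dots> = (if m dvd i then F $ (i div m) else 0)"
  proof (cases "m dvd i")
    case True
    have "i div m \<in> {0..i}" by simp
    then show ?thesis using True by (simp add: sum.delta')
  qed simp
  finally show ?thesis .
qed

lemma reindex_dvd:
  assumes m: "m \<ge> (1::nat)"
  shows "(\<Sum>i=0..n. (if m dvd i then \<phi> i else (0::rat))) = (\<Sum>k\<le>n. (if m * k \<le> n then \<phi> (m * k) else 0))"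
proof -
  have "(\<Sum>i=0..n. (if m dvd i then \<phi> i else (0::rat))) = (\<Sum>i\<in>{i\<in>{0..n}. m dvd i}. \<phi> i)"
    by (rule sym, rule sum.inter_filter) simp
  also have "{i\<in>{0..n}. m dvd i} = (\<lambda>k. m * k) ` {k\<in>{..n}. m * k \<le> n}"
  proof (intro equalityI subsetI)
    fix i assume "i \<in> {i\<in>{0..n}. m dvd i}"
    then obtain k where "i = m * k" "m * k \<le> n" by auto
    moreover have "k \<le> n" using \<open>m * k \<le> n\<close> m by (metis le_trans mult_le_mono1 mult_1)
    ultimately show "i \<in> (\<lambda>k. m * k) ` {k\<in>{..n}. m * k \<le> n}" by auto
  qed auto
  also have "(\<Sum>i\<in>(\<lambda>k. m * k) ` {k\<in>{..n}. m * k \<le> n}. \<phi> i) = (\<Sum>k\<in>{k\<in>{..n}. m * k \<le> n}. \<phi> (m * k))"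
    by (subst sum.reindex) (use m in \<open>auto simp: inj_on_def\<close>)
  also have "\<dots> = (\<Sum>k\<le>n. (if m * k \<le> n then \<phi> (m * k) else 0))"
    by (rule sum.inter_filter) simp
  finally show ?thesis .
qed

lemma group_rank:
  assumes ft: "finite_type \<rho>"
  shows "(\<Sum>z\<in>{z. \<rho> z \<le> n}. h (\<rho> z)) = (\<Sum>k\<le>n. card {p. \<rho> p = k} * (h k :: nat))"
proof -
  have "{z. \<rho> z \<le> n} = (\<Union>k\<in>{..n}. {p. \<rho> p = k})" by auto
  then have "(\<Sum>z\<in>{z. \<rho> z \<le> n}. h (\<rho> z)) = (\<Sum>k\<le>n. (\<Sum>z\<in>{p. \<rho> p = k}. h (\<rho> z)))"
    by (simp only:) (rule sum.UNION_disjoint, use ft in \<open>auto simp: finite_type_def\<close>)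
  also have "\<dots> = (\<Sum>k\<le>n. card {p. \<rho> p = k} * h k)"
    by (rule sum.cong[OF refl]) simp
  finally show ?thesis .
qed


theorem corollary2:
  fixes \<rho> :: "'a::order \<Rightarrow> nat" and zero :: 'a and m :: nat
  assumes "graded_by \<rho>" and "finite_type \<rho>" and "upho TYPE('a)"
    and "\<forall>p. zero \<le> p" and "meet_semilattice TYPE('a)" and "m \<ge> 1"
  shows "meet_tuple_gf \<rho> zero m
           = rank_gf \<rho> ^ m * inverse (rank_gf \<rho> oo (fps_X ^ m))"
proof -
  note gr = assms(1) and ft = assms(2) and up = assms(3) and zmin = assms(4)
    and ms = assms(5) and m = assms(6)
  define F where "F = rank_gf \<rho>"
  define G where "G = F oo fps_X ^ m"
  define M where "M = meet_tuple_gf \<rho> zero m"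
  define a where "a n = card (Am \<rho> m zero n)" for n
  have Mn: "M $ n = of_nat (a n)" for n
    unfolding M_def a_def meet_tuple_gf_def Am_def by simp
  have key: "F ^ m = G * M"
  proof (rule fps_ext)
    fix n
    have "(F ^ m) $ n = of_nat (card (TT \<rho> m n))" unfolding F_def by (rule power_coeff[OF ft])
    also have "card (TT \<rho> m n) = (\<Sum>z\<in>{z. \<rho> z \<le> n}. (if m * \<rho> z \<le> n then a (n - m * \<rho> z) else 0))"
      unfolding card_TT_meet[OF gr ft ms m] a_def
      by (rule sum.cong[OF refl]) (rule card_Am[OF gr ms up zmin m])
    also have "\<dots> = (\<Sum>k\<le>n. card {p. \<rho> p = k} * (if m * k \<le> n then a (n - m * k) else 0))"
      by (rule group_rank[OF ft])
    finally have L: "(F ^ m) $ n = (\<Sum>k\<le>n. (if m * k \<le> n then F $ k * M $ (n - m * k) else 0))"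
      by (simp add: of_nat_sum F_def rank_gf_nth Mn if_distrib cong: if_cong)
    have "(G * M) $ n = (\<Sum>i=0..n. G $ i * M $ (n - i))" by (simp add: fps_mult_nth)
    also have "\<dots> = (\<Sum>i=0..n. (if m dvd i then F $ (i div m) * M $ (n - i) else 0))"
      unfolding G_def compose_Xpow_nth[OF m] by (rule sum.cong) auto
    also have "\<dots> = (\<Sum>k\<le>n. (if m * k \<le> n then F $ (m * k div m) * M $ (n - m * k) else 0))"
      by (rule reindex_dvd[OF m])
    also have "\<dots> = (\<Sum>k\<le>n. (if m * k \<le> n then F $ k * M $ (n - m * k) else 0))"
    proof -
      have m0: "m \<noteq> 0" using m by simp
      have d: "m * k div m = k" for k using m0 by simp
      show ?thesis by (simp only: d)
    qed
    finally show "(F ^ m) $ n = (G * M) $ n" using L by simp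
  qed
  have r0: "\<rho> zero = 0" by (rule min_rank[OF gr zmin])
  have "{p. \<rho> p = 0} = {zero}"
  proof (intro equalityI subsetI)
    fix p assume p: "p \<in> {p. \<rho> p = 0}"
    show "p \<in> {zero}"
    proof (rule ccontr)
      assume "p \<notin> {zero}"
      then have "zero < p" using zmin by (simp add: order_less_le)
      then show False using less_rank[OF gr, of zero p] p r0 by simp
    qed
  qed (use r0 in simp)
  then have G0: "G $ 0 \<noteq> 0" unfolding G_def F_def by (simp add: rank_gf_nth)
  have "F ^ m * inverse G = M * (G * inverse G)" using key by (simp add: ac_simps)
  also have "\<dots> = M" using inverse_mult_eq_1'[OF G0] by simp
  finally show ?thesis unfolding F_def G_def M_def by simp
qed

end
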